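(* $\mathsf{ICM}$ is a variety. It is axiomatized by the axioms of commutative (unital) rings together with the equations $$x\approx x^2x^*,\qquad x\approx x^{**},\qquad (r_p(x))^p\approx(1-p^*p)\,x\quad\text{for every prime }p,$$ where $p$ denotes the term $1+\dots+1$ ($p$ summands).
   Context: The language is $\{+,\cdot,-,0,1,(\,)^*\}\cup\{r_p:p\text{ prime}\}$ with $(\,)^*$ and $r_p$ unary. A field is weakly rooted if it has characteristic $0$, or has prime characteristic $p$ and every element has a $p$-th root. Weak inverse: $a^*=a^{-1}$ if $a\ne0$, $0^*=0$. Weak $p$-root (in a weakly rooted field): $r_p(a)=\sqrt[p]{a}$ if the characteristic is $p$, and $0$ otherwise. An implicitly closed field is a weakly rooted field expanded by $(\,)^*$ and all $r_p$. $\mathsf{ICM}$ is the class of algebras isomorphic to subalgebras of direct products of implicitly closed fields. *)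

theory Defs
  imports "HOL-Computational_Algebra.Primes" "HOL-Library.FuncSet"
begin

text \<open>Algebras in the language {+, *, -, 0, 1, ( )^*} together with r_p for p prime.
  An algebra is given on a carrier set; the operation root p is r_p (only
  meaningful for prime p).\<close>

record 'a icalg =
  carrier :: "'a set"
  add :: "'a \<Rightarrow> 'a \<Rightarrow> 'a"
  mul :: "'a \<Rightarrow> 'a \<Rightarrow> 'a"
  neg :: "'a \<Rightarrow> 'a"
  zero :: 'a
  one :: 'a
  star :: "'a \<Rightarrow> 'a"
  root :: "nat \<Rightarrow> 'a \<Rightarrow> 'a"

definition is_algebra :: "('a, 'm) icalg_scheme \<Rightarrow> bool" where
  "is_algebra A \<longleftrightarrow>
     zero A \<in> carrier A \<and> one A \<in> carrier A \<and>
     (\<forall>x\<in>carrier A. \<forall>y\<in>carrier A. add A x y \<in> carrier A \<and> mul A x y \<in> carrier A) \<and>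
     (\<forall>x\<in>carrier A. neg A x \<in> carrier A \<and> star A x \<in> carrier A) \<and>
     (\<forall>p x. prime p \<and> x \<in> carrier A \<longrightarrow> root A p x \<in> carrier A)"

primrec natc :: "('a, 'm) icalg_scheme \<Rightarrow> nat \<Rightarrow> 'a" where
  "natc A 0 = zero A"
| "natc A (Suc n) = (if n = 0 then one A else add A (natc A n) (one A))"

primrec pw :: "('a, 'm) icalg_scheme \<Rightarrow> 'a \<Rightarrow> nat \<Rightarrow> 'a" where
  "pw A x 0 = one A"
| "pw A x (Suc n) = mul A (pw A x n) x"

definition comm_ring_ax :: "('a, 'm) icalg_scheme \<Rightarrow> bool" where
  "comm_ring_ax A \<longleftrightarrow>
     (\<forall>x\<in>carrier A. \<forall>y\<in>carrier A. \<forall>z\<in>carrier A.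
        add A (add A x y) z = add A x (add A y z) \<and>
        mul A (mul A x y) z = mul A x (mul A y z) \<and>
        mul A x (add A y z) = add A (mul A x y) (mul A x z)) \<and>
     (\<forall>x\<in>carrier A. \<forall>y\<in>carrier A. add A x y = add A y x \<and> mul A x y = mul A y x) \<and>
     (\<forall>x\<in>carrier A. add A x (zero A) = x \<and> add A x (neg A x) = zero A \<and>
        mul A x (one A) = x)"

definition ICM_axioms :: "('a, 'm) icalg_scheme \<Rightarrow> bool" where
  "ICM_axioms A \<longleftrightarrow> comm_ring_ax A \<and>
     (\<forall>x\<in>carrier A. x = mul A (pw A x 2) (star A x)) \<and>
     (\<forall>x\<in>carrier A. x = star A (star A x)) \<and>
     (\<forall>p x. prime p \<and> x \<in> carrier A \<longrightarrow>
        pw A (root A p x) p =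
          mul A (add A (one A) (neg A (mul A (star A (natc A p)) (natc A p)))) x)"

definition is_field :: "('a, 'm) icalg_scheme \<Rightarrow> bool" where
  "is_field F \<longleftrightarrow> is_algebra F \<and> comm_ring_ax F \<and> one F \<noteq> zero F \<and>
     (\<forall>x\<in>carrier F. x \<noteq> zero F \<longrightarrow> (\<exists>y\<in>carrier F. mul F x y = one F))"

definition char_zero_alg :: "('a, 'm) icalg_scheme \<Rightarrow> bool" where
  "char_zero_alg F \<longleftrightarrow> (\<forall>n>0. natc F n \<noteq> zero F)"

definition char_eq :: "('a, 'm) icalg_scheme \<Rightarrow> nat \<Rightarrow> bool" where
  "char_eq F p \<longleftrightarrow> p > 0 \<and> natc F p = zero F \<and> (\<forall>n. 0 < n \<and> n < p \<longrightarrow> natc F n \<noteq> zero F)"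

definition weakly_rooted :: "('a, 'm) icalg_scheme \<Rightarrow> bool" where
  "weakly_rooted F \<longleftrightarrow> char_zero_alg F \<or>
     (\<exists>p. prime p \<and> char_eq F p \<and> (\<forall>a\<in>carrier F. \<exists>b\<in>carrier F. pw F b p = a))"

definition implicitly_closed_field :: "('a, 'm) icalg_scheme \<Rightarrow> bool" where
  "implicitly_closed_field F \<longleftrightarrow> is_field F \<and> weakly_rooted F \<and>
     star F (zero F) = zero F \<and>
     (\<forall>a\<in>carrier F. a \<noteq> zero F \<longrightarrow> mul F a (star F a) = one F) \<and>
     (\<forall>p a. prime p \<and> a \<in> carrier F \<longrightarrow>
        (char_eq F p \<longrightarrow> pw F (root F p a) p = a) \<and>
        (\<not> char_eq F p \<longrightarrow> root F p a = zero F))"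

definition prod_alg :: "'i set \<Rightarrow> ('i \<Rightarrow> 'b icalg) \<Rightarrow> ('i \<Rightarrow> 'b) icalg" where
  "prod_alg I F = \<lparr> carrier = PiE I (\<lambda>i. carrier (F i)),
     add = (\<lambda>f g. \<lambda>i\<in>I. add (F i) (f i) (g i)),
     mul = (\<lambda>f g. \<lambda>i\<in>I. mul (F i) (f i) (g i)),
     neg = (\<lambda>f. \<lambda>i\<in>I. neg (F i) (f i)),
     zero = (\<lambda>i\<in>I. zero (F i)),
     one = (\<lambda>i\<in>I. one (F i)),
     star = (\<lambda>f. \<lambda>i\<in>I. star (F i) (f i)),
     root = (\<lambda>p f. \<lambda>i\<in>I. root (F i) p (f i)) \<rparr>"

definition is_hom :: "('a, 'm) icalg_scheme \<Rightarrow> ('b, 'n) icalg_scheme \<Rightarrow> ('a \<Rightarrow> 'b) \<Rightarrow> bool" where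
  "is_hom A B h \<longleftrightarrow> h \<in> carrier A \<rightarrow> carrier B \<and>
     h (zero A) = zero B \<and> h (one A) = one B \<and>
     (\<forall>x\<in>carrier A. \<forall>y\<in>carrier A. h (add A x y) = add B (h x) (h y) \<and>
        h (mul A x y) = mul B (h x) (h y)) \<and>
     (\<forall>x\<in>carrier A. h (neg A x) = neg B (h x) \<and> h (star A x) = star B (h x)) \<and>
     (\<forall>p x. prime p \<and> x \<in> carrier A \<longrightarrow> h (root A p x) = root B p (h x))"

definition ICM_embedding :: "'a icalg \<Rightarrow> 'i set \<Rightarrow> ('i \<Rightarrow> 'b icalg) \<Rightarrow> ('a \<Rightarrow> 'i \<Rightarrow> 'b) \<Rightarrow> bool" where
  "ICM_embedding A I F h \<longleftrightarrow> (\<forall>i\<in>I. implicitly_closed_field (F i)) \<and>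
     is_hom A (prod_alg I F) h \<and> inj_on h (carrier A)"

end

theory Submission
  imports Defs
begin


primrec fs :: "('a,'m) icalg_scheme \<Rightarrow> (nat \<Rightarrow> 'a) \<Rightarrow> nat \<Rightarrow> 'a" where
  "fs A f 0 = zero A"
| "fs A f (Suc n) = add A (fs A f n) (f n)"

locale cr =
  fixes A :: "('a,'m) icalg_scheme" (structure)
  assumes ax: "comm_ring_ax A"
    and zero_c[simp]: "zero A \<in> carrier A" and one_c[simp]: "one A \<in> carrier A"
    and add_c[simp]: "x \<in> carrier A \<Longrightarrow> y \<in> carrier A \<Longrightarrow> add A x y \<in> carrier A"
    and mul_c[simp]: "x \<in> carrier A \<Longrightarrow> y \<in> carrier A \<Longrightarrow> mul A x y \<in> carrier A"
    and neg_c[simp]: "x \<in> carrier A \<Longrightarrow> neg A x \<in> carrier A"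
begin

abbreviation pl (infixl "\<oplus>" 65) where "x \<oplus> y \<equiv> add A x y"
abbreviation ti (infixl "\<otimes>" 70) where "x \<otimes> y \<equiv> mul A x y"
abbreviation ze ("\<zero>") where "\<zero> \<equiv> zero A"
abbreviation on ("\<one>") where "\<one> \<equiv> one A"
abbreviation ng ("\<ominus> _" [81] 80) where "\<ominus> x \<equiv> neg A x"

lemma add_assoc: "x \<in> carrier A \<Longrightarrow> y \<in> carrier A \<Longrightarrow> z \<in> carrier A \<Longrightarrow> x \<oplus> y \<oplus> z = x \<oplus> (y \<oplus> z)"
  using ax unfolding comm_ring_ax_def by blast
lemma mul_assoc: "x \<in> carrier A \<Longrightarrow> y \<in> carrier A \<Longrightarrow> z \<in> carrier A \<Longrightarrow> x \<otimes> y \<otimes> z = x \<otimes> (y \<otimes> z)"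
  using ax unfolding comm_ring_ax_def by blast
lemma distr: "x \<in> carrier A \<Longrightarrow> y \<in> carrier A \<Longrightarrow> z \<in> carrier A \<Longrightarrow> x \<otimes> (y \<oplus> z) = x \<otimes> y \<oplus> x \<otimes> z"
  using ax unfolding comm_ring_ax_def by blast
lemma add_comm: "x \<in> carrier A \<Longrightarrow> y \<in> carrier A \<Longrightarrow> x \<oplus> y = y \<oplus> x"
  using ax unfolding comm_ring_ax_def by blast
lemma mul_comm: "x \<in> carrier A \<Longrightarrow> y \<in> carrier A \<Longrightarrow> x \<otimes> y = y \<otimes> x"
  using ax unfolding comm_ring_ax_def by blast
lemma add_zero[simp]: "x \<in> carrier A \<Longrightarrow> x \<oplus> \<zero> = x"
  using ax unfolding comm_ring_ax_def by blast
lemma add_neg[simp]: "x \<in> carrier A \<Longrightarrow> x \<oplus> \<ominus> x = \<zero>"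
  using ax unfolding comm_ring_ax_def by blast
lemma mul_one[simp]: "x \<in> carrier A \<Longrightarrow> x \<otimes> \<one> = x"
  using ax unfolding comm_ring_ax_def by blast
lemma add_lcomm: "x \<in> carrier A \<Longrightarrow> y \<in> carrier A \<Longrightarrow> z \<in> carrier A \<Longrightarrow> x \<oplus> (y \<oplus> z) = y \<oplus> (x \<oplus> z)"
  by (metis add_assoc add_comm)
lemma mul_lcomm: "x \<in> carrier A \<Longrightarrow> y \<in> carrier A \<Longrightarrow> z \<in> carrier A \<Longrightarrow> x \<otimes> (y \<otimes> z) = y \<otimes> (x \<otimes> z)"
  by (metis mul_assoc mul_comm)
lemma distr2: "x \<in> carrier A \<Longrightarrow> y \<in> carrier A \<Longrightarrow> z \<in> carrier A \<Longrightarrow> (y \<oplus> z) \<otimes> x = y \<otimes> x \<oplus> z \<otimes> x"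
  by (metis distr mul_comm add_c)
lemma zero_add[simp]: "x \<in> carrier A \<Longrightarrow> \<zero> \<oplus> x = x" by (metis add_comm add_zero zero_c)
lemma one_mul[simp]: "x \<in> carrier A \<Longrightarrow> \<one> \<otimes> x = x" by (metis mul_comm mul_one one_c)
lemma neg_add[simp]: "x \<in> carrier A \<Longrightarrow> \<ominus> x \<oplus> x = \<zero>" by (metis add_comm add_neg neg_c)
lemma add_cancel: assumes "x \<in> carrier A" "y \<in> carrier A" "z \<in> carrier A" "x \<oplus> y = x \<oplus> z" shows "y = z"
proof -
  have "\<ominus> x \<oplus> (x \<oplus> y) = \<ominus> x \<oplus> (x \<oplus> z)" using assms(4) by simp
  then show ?thesis using assms(1-3) by (simp add: add_assoc[symmetric])
qed
lemma mul_zero[simp]: "x \<in> carrier A \<Longrightarrow> x \<otimes> \<zero> = \<zero>"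
proof -
  assume x: "x \<in> carrier A"
  have "x \<otimes> \<zero> \<oplus> x \<otimes> \<zero> = x \<otimes> \<zero> \<oplus> \<zero>" using x by (simp add: distr[symmetric])
  then show ?thesis using x by (metis add_cancel mul_c zero_c)
qed
lemma zero_mul[simp]: "x \<in> carrier A \<Longrightarrow> \<zero> \<otimes> x = \<zero>" by (metis mul_comm mul_zero zero_c)
lemma neg_unique: "x \<in> carrier A \<Longrightarrow> y \<in> carrier A \<Longrightarrow> x \<oplus> y = \<zero> \<Longrightarrow> y = \<ominus> x"
  by (metis add_cancel add_neg neg_c)
lemma neg_neg[simp]: "x \<in> carrier A \<Longrightarrow> \<ominus> (\<ominus> x) = x"
  by (metis neg_add neg_c neg_unique)
lemma neg_zero[simp]: "\<ominus> \<zero> = \<zero>" by (metis add_zero neg_unique zero_c)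
lemma neg_distr: "x \<in> carrier A \<Longrightarrow> y \<in> carrier A \<Longrightarrow> \<ominus> (x \<oplus> y) = \<ominus> x \<oplus> \<ominus> y"
proof -
  assume c: "x \<in> carrier A" "y \<in> carrier A"
  have "(x \<oplus> y) \<oplus> (\<ominus> x \<oplus> \<ominus> y) = \<zero>" using c
    by (simp add: add_assoc add_lcomm[of y])
  then show ?thesis using c by (metis neg_unique add_c neg_c)
qed
lemma neg_mul: "x \<in> carrier A \<Longrightarrow> y \<in> carrier A \<Longrightarrow> \<ominus> x \<otimes> y = \<ominus> (x \<otimes> y)"
proof -
  assume c: "x \<in> carrier A" "y \<in> carrier A"
  have "x \<otimes> y \<oplus> \<ominus> x \<otimes> y = \<zero>" using c by (simp add: distr2[symmetric])
  then show ?thesis using c by (metis neg_unique mul_c neg_c)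
qed
lemma mul_neg: "x \<in> carrier A \<Longrightarrow> y \<in> carrier A \<Longrightarrow> x \<otimes> \<ominus> y = \<ominus> (x \<otimes> y)"
  by (metis neg_mul mul_comm neg_c)
lemma add_neg2: "x \<in> carrier A \<Longrightarrow> y \<in> carrier A \<Longrightarrow> x \<oplus> (\<ominus> x \<oplus> y) = y"
  by (simp add: add_assoc[symmetric])
lemma add_neg3: "x \<in> carrier A \<Longrightarrow> y \<in> carrier A \<Longrightarrow> \<ominus> x \<oplus> (x \<oplus> y) = y"
  by (simp add: add_assoc[symmetric])

lemmas rs = add_assoc mul_assoc add_comm mul_comm add_lcomm mul_lcomm distr distr2 neg_distr neg_mul mul_neg add_neg2 add_neg3

lemma test: "x \<in> carrier A \<Longrightarrow> y \<in> carrier A \<Longrightarrow> z \<in> carrier A \<Longrightarrow>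
  (x \<oplus> \<ominus> y) \<otimes> (z \<oplus> x) = z \<otimes> x \<oplus> x \<otimes> x \<oplus> \<ominus> (y \<otimes> z) \<oplus> \<ominus>(x \<otimes> y)"
  by (simp add: rs)


lemma natc_c[simp]: "natc A n \<in> carrier A"
  by (induction n) auto
lemma natc_Suc: "natc A (Suc n) = natc A n \<oplus> \<one>"
  by (cases n) auto
lemma natc_add: "natc A (m + n) = natc A m \<oplus> natc A n"
  by (induction n) (auto simp: natc_Suc add_assoc)
lemma natc_mult: "natc A (m * n) = natc A m \<otimes> natc A n"
  by (induction n) (auto simp: natc_add distr add_comm)
lemma pw_c[simp]: "x \<in> carrier A \<Longrightarrow> pw A x n \<in> carrier A"
  by (induction n) auto
lemma pw_add: "x \<in> carrier A \<Longrightarrow> pw A x (m + n) = pw A x m \<otimes> pw A x n"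
  by (induction n) (auto simp: mul_assoc)
lemma pw_mul: "x \<in> carrier A \<Longrightarrow> y \<in> carrier A \<Longrightarrow> pw A (x \<otimes> y) n = pw A x n \<otimes> pw A y n"
  by (induction n) (auto simp: rs)
lemma pw_zero: "n > 0 \<Longrightarrow> pw A \<zero> n = \<zero>"
  by (cases n) auto

lemma fs_c[simp]: "(\<And>k. f k \<in> carrier A) \<Longrightarrow> fs A f n \<in> carrier A"
  by (induction n) auto
lemma fs_cong: "(\<And>k. k < n \<Longrightarrow> f k = g k) \<Longrightarrow> fs A f n = fs A g n"
  by (induction n) auto
lemma fs_addf: "(\<And>k. f k \<in> carrier A) \<Longrightarrow> (\<And>k. g k \<in> carrier A) \<Longrightarrow>
   fs A (\<lambda>k. f k \<oplus> g k) n = fs A f n \<oplus> fs A g n"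
  by (induction n) (auto simp: rs)
lemma fs_mulc: "(\<And>k. f k \<in> carrier A) \<Longrightarrow> c \<in> carrier A \<Longrightarrow>
   c \<otimes> fs A f n = fs A (\<lambda>k. c \<otimes> f k) n"
  by (induction n) (auto simp: rs)
lemma fs_shift: "(\<And>k. f k \<in> carrier A) \<Longrightarrow> fs A f (Suc n) = f 0 \<oplus> fs A (\<lambda>k. f (Suc k)) n"
  by (induction n) (auto simp: rs)

lemma binomial:
  assumes a: "a \<in> carrier A" and b: "b \<in> carrier A"
  shows "pw A (a \<oplus> b) n = fs A (\<lambda>k. natc A (n choose k) \<otimes> (pw A a k \<otimes> pw A b (n - k))) (Suc n)"
proof (induction n)
  case 0
  then show ?case using a b by simp
next
  case (Suc n)
  define T where "T = (\<lambda>k. natc A (n choose k) \<otimes> (pw A a k \<otimes> pw A b (n - k)))"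
  define U where "U = (\<lambda>k. natc A (n choose k) \<otimes> (pw A a (Suc k) \<otimes> pw A b (n - k)))"
  define V where "V = (\<lambda>k. natc A (n choose Suc k) \<otimes> (pw A a (Suc k) \<otimes> pw A b (n - k)))"
  have Tc: "\<And>k. T k \<in> carrier A" "\<And>k. U k \<in> carrier A" "\<And>k. V k \<in> carrier A"
    unfolding T_def U_def V_def using a b by auto
  have "pw A (a \<oplus> b) (Suc n) = fs A T (Suc n) \<otimes> a \<oplus> fs A T (Suc n) \<otimes> b"
    using Suc a b Tc by (simp add: T_def distr)
  also have "fs A T (Suc n) \<otimes> a = fs A U (Suc n)"
  proof -
    have "fs A T (Suc n) \<otimes> a = fs A (\<lambda>k. a \<otimes> T k) (Suc n)"
      using fs_mulc[of T a "Suc n"] Tc a by (simp add: mul_comm[of _ a] del: fs.simps)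
    also have "\<dots> = fs A U (Suc n)"
      using a b by (intro fs_cong) (simp add: T_def U_def rs)
    finally show ?thesis .
  qed
  also have "fs A T (Suc n) \<otimes> b = fs A (\<lambda>k. natc A (n choose k) \<otimes> (pw A a k \<otimes> pw A b (Suc n - k))) (Suc n)"
  proof -
    have "fs A T (Suc n) \<otimes> b = fs A (\<lambda>k. b \<otimes> T k) (Suc n)"
      using fs_mulc[of T b "Suc n"] Tc b by (simp add: mul_comm[of _ b] del: fs.simps)
    also have "\<dots> = fs A (\<lambda>k. natc A (n choose k) \<otimes> (pw A a k \<otimes> pw A b (Suc n - k))) (Suc n)"
    proof (rule fs_cong)
      fix k assume "k < Suc n"
      then have "Suc n - k = Suc (n - k)" by simp
      then show "b \<otimes> T k = natc A (n choose k) \<otimes> (pw A a k \<otimes> pw A b (Suc n - k))"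
        using a b by (simp add: T_def rs)
    qed
    finally show ?thesis .
  qed
  also have "\<dots> = pw A b (Suc n) \<oplus> fs A V n"
    using a b by (subst fs_shift) (auto simp: V_def)
  also have "fs A V n = fs A V (Suc n)"
    using a b by (simp add: V_def binomial_eq_0)
  also have "fs A U (Suc n) \<oplus> (pw A b (Suc n) \<oplus> fs A V (Suc n)) =
     pw A b (Suc n) \<oplus> fs A (\<lambda>k. U k \<oplus> V k) (Suc n)"
    using Tc a b by (simp add: fs_addf[of U V] rs del: fs.simps)
  also have "fs A (\<lambda>k. U k \<oplus> V k) (Suc n) = fs A (\<lambda>k. natc A (Suc n choose Suc k) \<otimes> (pw A a (Suc k) \<otimes> pw A b (Suc n - Suc k))) (Suc n)"
    using a b by (intro fs_cong) (simp add: U_def V_def natc_add distr2)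
  also have "pw A b (Suc n) \<oplus> \<dots> = fs A (\<lambda>k. natc A (Suc n choose k) \<otimes> (pw A a k \<otimes> pw A b (Suc n - k))) (Suc (Suc n))"
    using a b by (subst fs_shift[where n="Suc n"]) auto
  finally show ?case .
qed

lemma frob:
  assumes p: "prime p" and a: "a \<in> carrier A" and b: "b \<in> carrier A"
  shows "\<exists>c\<in>carrier A. pw A (a \<oplus> b) p = pw A a p \<oplus> pw A b p \<oplus> natc A p \<otimes> c"
proof -
  obtain q where q: "p = Suc q" using p by (cases p) auto
  define T where "T = (\<lambda>k. natc A (p choose k) \<otimes> (pw A a k \<otimes> pw A b (p - k)))"
  define W where "W = (\<lambda>k. natc A ((p choose Suc k) div p) \<otimes> (pw A a (Suc k) \<otimes> pw A b (p - Suc k)))"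
  have Tc: "\<And>k. T k \<in> carrier A" "\<And>k. W k \<in> carrier A" using a b by (auto simp: T_def W_def)
  have "pw A (a \<oplus> b) p = fs A T (Suc p)" using binomial[OF a b, of p] by (simp add: T_def del: fs.simps)
  also have "\<dots> = T 0 \<oplus> (fs A (\<lambda>k. T (Suc k)) q \<oplus> T p)"
    using Tc by (subst fs_shift) (auto simp: q)
  also have "fs A (\<lambda>k. T (Suc k)) q = fs A (\<lambda>k. natc A p \<otimes> W k) q"
  proof (rule fs_cong)
    fix k assume k: "k < q"
    have "p dvd (p choose Suc k)" using k q p by (intro dvd_choose_prime) auto
    then have "p choose Suc k = p * ((p choose Suc k) div p)" by simp
    then have "natc A (p choose Suc k) = natc A p \<otimes> natc A ((p choose Suc k) div p)"
      by (metis natc_mult)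
    then show "T (Suc k) = natc A p \<otimes> W k" using a b by (simp add: T_def W_def rs del: pw.simps)
  qed
  also have "\<dots> = natc A p \<otimes> fs A W q" using Tc by (simp add: fs_mulc)
  finally have "pw A (a \<oplus> b) p = pw A a p \<oplus> pw A b p \<oplus> natc A p \<otimes> fs A W q"
    using a b Tc by (simp add: T_def rs q)
  then show ?thesis using Tc by (intro bexI[of _ "fs A W q"]) auto
qed

end

context cr begin

definition ideal :: "'a set \<Rightarrow> bool" where
  "ideal J \<longleftrightarrow> J \<subseteq> carrier A \<and> \<zero> \<in> J \<and> (\<forall>x\<in>J. \<forall>y\<in>J. x \<oplus> y \<in> J) \<and> (\<forall>x\<in>J. \<forall>r\<in>carrier A. r \<otimes> x \<in> J)"

definition cg :: "'a set \<Rightarrow> 'a \<Rightarrow> 'a \<Rightarrow> bool" where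
  "cg J x y \<longleftrightarrow> x \<in> carrier A \<and> y \<in> carrier A \<and> x \<oplus> \<ominus> y \<in> J"

lemma idealD:
  assumes "ideal J"
  shows "J \<subseteq> carrier A" "\<zero> \<in> J" "x \<in> J \<Longrightarrow> y \<in> J \<Longrightarrow> x \<oplus> y \<in> J"
    "x \<in> J \<Longrightarrow> r \<in> carrier A \<Longrightarrow> r \<otimes> x \<in> J" "x \<in> J \<Longrightarrow> r \<in> carrier A \<Longrightarrow> x \<otimes> r \<in> J"
  using assms unfolding ideal_def by (auto simp: mul_comm)

lemma ideal_neg: "ideal J \<Longrightarrow> x \<in> J \<Longrightarrow> \<ominus> x \<in> J"
proof -
  assume J: "ideal J" and x: "x \<in> J"
  then have xc: "x \<in> carrier A" using idealD(1) by blast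
  have "\<ominus> \<one> \<otimes> x \<in> J" using idealD(4)[OF J x] by simp
  then show ?thesis using xc by (simp add: neg_mul)
qed

lemma sub_self: "x \<in> carrier A \<Longrightarrow> y \<in> carrier A \<Longrightarrow> x \<oplus> \<ominus> y \<oplus> y = x"
  by (simp add: add_assoc)

lemma cg_refl: "ideal J \<Longrightarrow> x \<in> carrier A \<Longrightarrow> cg J x x"
  unfolding cg_def using idealD(2) by auto
lemma cg_eq: "ideal J \<Longrightarrow> x \<in> carrier A \<Longrightarrow> x = y \<Longrightarrow> cg J x y"
  using cg_refl by blast
lemma cg_sym: "ideal J \<Longrightarrow> cg J x y \<Longrightarrow> cg J y x"
proof -
  assume J: "ideal J" and a: "cg J x y"
  then have c: "x \<in> carrier A" "y \<in> carrier A" and m: "\<ominus> (x \<oplus> \<ominus> y) \<in> J"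
    unfolding cg_def using ideal_neg by auto
  have "\<ominus> (x \<oplus> \<ominus> y) = y \<oplus> \<ominus> x" using c by (simp add: neg_distr add_comm)
  then show ?thesis using m c unfolding cg_def by auto
qed
lemma cg_trans: "ideal J \<Longrightarrow> cg J x y \<Longrightarrow> cg J y z \<Longrightarrow> cg J x z"
proof -
  assume J: "ideal J" and a: "cg J x y" "cg J y z"
  then have c: "x \<in> carrier A" "y \<in> carrier A" "z \<in> carrier A" and m: "x \<oplus> \<ominus> y \<in> J" "y \<oplus> \<ominus> z \<in> J"
    unfolding cg_def by auto
  have "(x \<oplus> \<ominus> y) \<oplus> (y \<oplus> \<ominus> z) = x \<oplus> (\<ominus> y \<oplus> (y \<oplus> \<ominus> z))" using c by (simp add: add_assoc)
  also have "\<dots> = x \<oplus> \<ominus> z" using c by (simp add: add_neg3)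
  finally show ?thesis using idealD(3)[OF J m] c unfolding cg_def by auto
qed
lemma cg_add: "ideal J \<Longrightarrow> cg J x x' \<Longrightarrow> cg J y y' \<Longrightarrow> cg J (x \<oplus> y) (x' \<oplus> y')"
proof -
  assume J: "ideal J" and a: "cg J x x'" "cg J y y'"
  then have c: "x \<in> carrier A" "x' \<in> carrier A" "y \<in> carrier A" "y' \<in> carrier A"
     and m: "x \<oplus> \<ominus> x' \<in> J" "y \<oplus> \<ominus> y' \<in> J"
    unfolding cg_def by auto
  have "(x \<oplus> \<ominus> x') \<oplus> (y \<oplus> \<ominus> y') = (x \<oplus> y) \<oplus> \<ominus> (x' \<oplus> y')" using c by (simp add: rs)
  then show ?thesis using idealD(3)[OF J m] c unfolding cg_def by auto
qed
lemma cg_neg: "ideal J \<Longrightarrow> cg J x x' \<Longrightarrow> cg J (\<ominus> x) (\<ominus> x')"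
proof -
  assume J: "ideal J" and a: "cg J x x'"
  then have c: "x \<in> carrier A" "x' \<in> carrier A" and m: "\<ominus> (x \<oplus> \<ominus> x') \<in> J"
    unfolding cg_def using ideal_neg by auto
  have "\<ominus> (x \<oplus> \<ominus> x') = \<ominus> x \<oplus> \<ominus> (\<ominus> x')" using c by (simp add: neg_distr)
  then show ?thesis using m c unfolding cg_def by auto
qed
lemma cg_mul: "ideal J \<Longrightarrow> cg J x x' \<Longrightarrow> cg J y y' \<Longrightarrow> cg J (x \<otimes> y) (x' \<otimes> y')"
proof -
  assume J: "ideal J" and a: "cg J x x'" "cg J y y'"
  then have c: "x \<in> carrier A" "x' \<in> carrier A" "y \<in> carrier A" "y' \<in> carrier A"
     and m: "x \<oplus> \<ominus> x' \<in> J" "y \<oplus> \<ominus> y' \<in> J"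
    unfolding cg_def by auto
  have 1: "cg J (x \<otimes> y) (x \<otimes> y')"
  proof -
    have "x \<otimes> (y \<oplus> \<ominus> y') = x \<otimes> y \<oplus> \<ominus> (x \<otimes> y')" using c by (simp add: distr mul_neg)
    then show ?thesis using idealD(4)[OF J m(2) c(1)] c unfolding cg_def by auto
  qed
  have 2: "cg J (x \<otimes> y') (x' \<otimes> y')"
  proof -
    have "(x \<oplus> \<ominus> x') \<otimes> y' = x \<otimes> y' \<oplus> \<ominus> (x' \<otimes> y')" using c by (simp add: distr2 neg_mul)
    then show ?thesis using idealD(5)[OF J m(1) c(4)] c unfolding cg_def by auto
  qed
  show ?thesis using cg_trans[OF J 1 2] .
qed
lemma cg_zero: "ideal J \<Longrightarrow> x \<in> J \<longleftrightarrow> cg J x \<zero>"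
proof -
  assume J: "ideal J"
  have "x \<in> J \<Longrightarrow> x \<in> carrier A" using idealD(1)[OF J] by blast
  then show ?thesis unfolding cg_def by auto
qed
lemma cg_pw: "ideal J \<Longrightarrow> cg J x y \<Longrightarrow> cg J (pw A x n) (pw A y n)"
  by (induction n) (auto intro: cg_mul cg_refl)
lemma cg_mem: "ideal J \<Longrightarrow> cg J x y \<Longrightarrow> x \<in> J \<Longrightarrow> y \<in> J"
  by (meson cg_sym cg_trans cg_zero)
lemma cg_cancel: "ideal J \<Longrightarrow> cg J (x \<oplus> y) y \<Longrightarrow> x \<in> carrier A \<Longrightarrow> x \<in> J"
proof -
  assume J: "ideal J" and a: "cg J (x \<oplus> y) y" and x: "x \<in> carrier A"
  have y: "y \<in> carrier A" using a unfolding cg_def by auto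
  have "cg J (x \<oplus> y \<oplus> \<ominus> y) (y \<oplus> \<ominus> y)" using cg_add[OF J a cg_refl[OF J, of "\<ominus> y"]] y by simp
  then show ?thesis using x y J by (simp add: add_assoc cg_zero)
qed

end


locale icm = cr +
  assumes star_c[simp]: "x \<in> carrier A \<Longrightarrow> star A x \<in> carrier A"
    and root_c[simp]: "prime p \<Longrightarrow> x \<in> carrier A \<Longrightarrow> root A p x \<in> carrier A"
    and reg: "x \<in> carrier A \<Longrightarrow> x = mul A (pw A x 2) (star A x)"
    and sts: "x \<in> carrier A \<Longrightarrow> star A (star A x) = x"
    and rt: "prime p \<Longrightarrow> x \<in> carrier A \<Longrightarrow>
       pw A (root A p x) p = mul A (add A (one A) (neg A (mul A (star A (natc A p)) (natc A p)))) x"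
begin

lemma reg': "x \<in> carrier A \<Longrightarrow> x \<otimes> x \<otimes> star A x = x"
  using reg[of x] by (simp add: numeral_2_eq_2)

definition pideal :: "'a set \<Rightarrow> bool" where
  "pideal M \<longleftrightarrow> ideal M \<and> \<one> \<notin> M \<and> (\<forall>x\<in>carrier A. \<forall>y\<in>carrier A. x \<otimes> y \<in> M \<longrightarrow> x \<in> M \<or> y \<in> M)"

lemma pideal_pw: "pideal M \<Longrightarrow> x \<in> carrier A \<Longrightarrow> pw A x n \<in> M \<Longrightarrow> 0 < n \<Longrightarrow> x \<in> M"
proof (induction n)
  case 0 then show ?case by simp
next
  case (Suc n)
  then have "pw A x n \<in> M \<or> x \<in> M" unfolding pideal_def by simp
  moreover have "pw A x n \<in> M \<Longrightarrow> n = 0 \<Longrightarrow> False" using Suc.prems unfolding pideal_def by simp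
  ultimately show ?case using Suc by blast
qed

lemma ext_ideal:
  assumes J: "ideal M" and x: "x \<in> carrier A"
  shows "ideal {m \<oplus> r \<otimes> x |m r. m \<in> M \<and> r \<in> carrier A}"
proof -
  have Mc: "\<And>m. m \<in> M \<Longrightarrow> m \<in> carrier A" using idealD(1)[OF J] by blast
  show ?thesis unfolding ideal_def
  proof (intro conjI ballI)
    show "{m \<oplus> r \<otimes> x |m r. m \<in> M \<and> r \<in> carrier A} \<subseteq> carrier A" using Mc x by auto
    show "\<zero> \<in> {m \<oplus> r \<otimes> x |m r. m \<in> M \<and> r \<in> carrier A}"
      using idealD(2)[OF J] x by (intro CollectI exI[of _ "\<zero>"]) auto
  next
    fix u v assume u: "u \<in> {m \<oplus> r \<otimes> x |m r. m \<in> M \<and> r \<in> carrier A}"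
      and v: "v \<in> {m \<oplus> r \<otimes> x |m r. m \<in> M \<and> r \<in> carrier A}"
    then obtain m1 r1 m2 r2 where "u = m1 \<oplus> r1 \<otimes> x" "v = m2 \<oplus> r2 \<otimes> x" "m1 \<in> M" "m2 \<in> M"
      "r1 \<in> carrier A" "r2 \<in> carrier A" by blast
    moreover have "m1 \<oplus> r1 \<otimes> x \<oplus> (m2 \<oplus> r2 \<otimes> x) = (m1 \<oplus> m2) \<oplus> (r1 \<oplus> r2) \<otimes> x"
      using calculation Mc x by (simp add: rs)
    ultimately show "u \<oplus> v \<in> {m \<oplus> r \<otimes> x |m r. m \<in> M \<and> r \<in> carrier A}"
      using idealD(3)[OF J] by (intro CollectI exI[of _ "m1 \<oplus> m2"] exI[of _ "r1 \<oplus> r2"]) auto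
  next
    fix u s assume u: "u \<in> {m \<oplus> r \<otimes> x |m r. m \<in> M \<and> r \<in> carrier A}" and s: "s \<in> carrier A"
    then obtain m1 r1 where "u = m1 \<oplus> r1 \<otimes> x" "m1 \<in> M" "r1 \<in> carrier A" by blast
    moreover have "s \<otimes> (m1 \<oplus> r1 \<otimes> x) = s \<otimes> m1 \<oplus> (s \<otimes> r1) \<otimes> x"
      using calculation Mc x s by (simp add: rs)
    ultimately show "s \<otimes> u \<in> {m \<oplus> r \<otimes> x |m r. m \<in> M \<and> r \<in> carrier A}"
      using idealD(4)[OF J] s by (intro CollectI exI[of _ "s \<otimes> m1"] exI[of _ "s \<otimes> r1"]) auto
  qed
qed

lemma zero_ideal: "ideal {\<zero>}"
  unfolding ideal_def by auto

lemma exists_pideal: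
  assumes a: "a \<in> carrier A" "a \<noteq> \<zero>"
  shows "\<exists>M. pideal M \<and> a \<notin> M"
proof -
  define S where "S = {J. ideal J \<and> a \<notin> J}"
  have "\<exists>M\<in>S. \<forall>X\<in>S. M \<subseteq> X \<longrightarrow> X = M"
  proof (rule Zorn_Lemma2, intro ballI)
    fix C assume C: "C \<in> chains S"
    show "\<exists>U\<in>S. \<forall>X\<in>C. X \<subseteq> U"
    proof (cases "C = {}")
      case True
      then show ?thesis using zero_ideal a unfolding S_def by auto
    next
      case False
      have CS: "C \<subseteq> S" and ch: "\<And>X Y. X \<in> C \<Longrightarrow> Y \<in> C \<Longrightarrow> X \<subseteq> Y \<or> Y \<subseteq> X"
        using C unfolding chains_def chain_subset_def by auto
      have id: "\<And>X. X \<in> C \<Longrightarrow> ideal X" using CS unfolding S_def by auto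
      have "ideal (\<Union>C)" unfolding ideal_def
      proof (intro conjI ballI)
        show "\<Union>C \<subseteq> carrier A" using id idealD(1) by blast
        show "\<zero> \<in> \<Union>C" using False id idealD(2) by blast
      next
        fix x y assume "x \<in> \<Union>C" "y \<in> \<Union>C"
        then obtain X Y where "X \<in> C" "Y \<in> C" "x \<in> X" "y \<in> Y" by blast
        then show "x \<oplus> y \<in> \<Union>C" using ch[of X Y] id idealD(3) by blast
      next
        fix x r assume "x \<in> \<Union>C" "r \<in> carrier A"
        then show "r \<otimes> x \<in> \<Union>C" using id idealD(4) by blast
      qed
      moreover have "a \<notin> \<Union>C" using CS unfolding S_def by auto
      ultimately show ?thesis unfolding S_def by blast
    qed
  qed
  then obtain M where M: "ideal M" "a \<notin> M" and mx: "\<And>X. ideal X \<Longrightarrow> a \<notin> X \<Longrightarrow> M \<subseteq> X \<Longrightarrow> X = M"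
    unfolding S_def by auto
  have Mc: "\<And>m. m \<in> M \<Longrightarrow> m \<in> carrier A" using idealD(1)[OF M(1)] by blast
  have one: "\<one> \<notin> M"
  proof
    assume "\<one> \<in> M" then have "a \<otimes> \<one> \<in> M" using idealD(4)[OF M(1)] a by blast
    then show False using M a by simp
  qed
  have ext: "\<exists>m r. m \<in> M \<and> r \<in> carrier A \<and> a = m \<oplus> r \<otimes> x" if x: "x \<in> carrier A" "x \<notin> M" for x
  proof -
    let ?J = "{m \<oplus> r \<otimes> x |m r. m \<in> M \<and> r \<in> carrier A}"
    have "M \<subseteq> ?J"
    proof
      fix m assume "m \<in> M" then show "m \<in> ?J" using Mc x by (intro CollectI exI[of _ m] exI[of _ "\<zero>"]) auto
    qed
    moreover have "x \<in> ?J" using x idealD(2)[OF M(1)] by (intro CollectI exI[of _ "\<zero>"] exI[of _ "\<one>"]) auto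
    ultimately have "a \<in> ?J" using mx[of ?J] ext_ideal[OF M(1) x(1)] x by blast
    then show ?thesis by blast
  qed
  have "pideal M" unfolding pideal_def
  proof (intro conjI ballI impI M one)
    fix x y assume xy: "x \<in> carrier A" "y \<in> carrier A" "x \<otimes> y \<in> M"
    show "x \<in> M \<or> y \<in> M"
    proof (rule ccontr)
      assume "\<not> (x \<in> M \<or> y \<in> M)"
      then obtain m1 r1 m2 r2 where e: "m1 \<in> M" "r1 \<in> carrier A" "a = m1 \<oplus> r1 \<otimes> x"
        "m2 \<in> M" "r2 \<in> carrier A" "a = m2 \<oplus> r2 \<otimes> y" using ext xy by meson
      have "a \<otimes> a = (m1 \<oplus> r1 \<otimes> x) \<otimes> (m2 \<oplus> r2 \<otimes> y)" using e(3,6) by metis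
      also have "\<dots> = m1 \<otimes> (m2 \<oplus> r2 \<otimes> y) \<oplus> (r1 \<otimes> x \<otimes> m2 \<oplus> (r1 \<otimes> r2) \<otimes> (x \<otimes> y))"
        using e(1,2,4,5) Mc xy by (simp add: rs)
      finally have "a \<otimes> a = m1 \<otimes> (m2 \<oplus> r2 \<otimes> y) \<oplus> (r1 \<otimes> x \<otimes> m2 \<oplus> (r1 \<otimes> r2) \<otimes> (x \<otimes> y))" .
      moreover have "m1 \<otimes> (m2 \<oplus> r2 \<otimes> y) \<in> M" using e Mc xy idealD(5)[OF M(1)] by auto
      moreover have "r1 \<otimes> x \<otimes> m2 \<in> M" using e Mc xy idealD(4)[OF M(1)] by auto
      moreover have "(r1 \<otimes> r2) \<otimes> (x \<otimes> y) \<in> M" using e Mc xy idealD(4)[OF M(1)] by auto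
      ultimately have "a \<otimes> a \<in> M" using idealD(3)[OF M(1)] by auto
      then have "a \<otimes> a \<otimes> star A a \<in> M" using idealD(5)[OF M(1)] a by auto
      then show False using reg' a M by simp
    qed
  qed
  then show ?thesis using M by blast
qed

end

context icm begin

lemma cg_subst: "cg J a b \<Longrightarrow> a = a' \<Longrightarrow> b = b' \<Longrightarrow> cg J a' b'" by simp

lemma pideal_ideal: "pideal M \<Longrightarrow> ideal M" unfolding pideal_def by simp

lemma star_in: "ideal J \<Longrightarrow> x \<in> J \<Longrightarrow> star A x \<in> J"
proof -
  assume J: "ideal J" and x: "x \<in> J"
  have xc: "x \<in> carrier A" using x idealD(1)[OF J] by blast
  have e: "star A x = pw A (star A x) 2 \<otimes> x" using reg[of "star A x"] sts[OF xc] xc by simp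
  have "pw A (star A x) 2 \<otimes> x \<in> J" using idealD(4)[OF J x] xc by simp
  then show ?thesis using e by simp
qed

lemma inv_cg: "pideal M \<Longrightarrow> x \<in> carrier A \<Longrightarrow> x \<notin> M \<Longrightarrow> cg M (x \<otimes> star A x) \<one>"
proof -
  assume M: "pideal M" and x: "x \<in> carrier A" "x \<notin> M"
  have "x \<otimes> (x \<otimes> star A x \<oplus> \<ominus> \<one>) = x \<otimes> x \<otimes> star A x \<oplus> \<ominus> x"
    using x by (simp add: distr mul_neg mul_assoc)
  also have "\<dots> = \<zero>" using reg' x by simp
  finally have "x \<otimes> (x \<otimes> star A x \<oplus> \<ominus> \<one>) \<in> M" using M unfolding pideal_def ideal_def by simp
  then have "x \<otimes> star A x \<oplus> \<ominus> \<one> \<in> M" using M x unfolding pideal_def by auto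
  then show ?thesis using x unfolding cg_def by simp
qed

lemma star_cong: assumes M: "pideal M" and xy: "cg M x y" shows "cg M (star A x) (star A y)"
proof -
  have J: "ideal M" using M by (rule pideal_ideal)
  have c: "x \<in> carrier A" "y \<in> carrier A" using xy unfolding cg_def by auto
  show ?thesis
  proof (cases "x \<in> M")
    case True
    then have "y \<in> M" using cg_mem[OF J xy] by simp
    then have "cg M (star A x) \<zero>" "cg M (star A y) \<zero>" using star_in[OF J] True J cg_zero by blast+
    then show ?thesis using cg_trans[OF J] cg_sym[OF J] by blast
  next
    case False
    then have yM: "y \<notin> M" using cg_mem[OF J cg_sym[OF J xy]] by blast
    have 1: "cg M (star A x \<otimes> (y \<otimes> star A y)) (star A x \<otimes> \<one>)"
      using cg_mul[OF J cg_refl[OF J, of "star A x"] inv_cg[OF M c(2) yM]] c by simp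
    have 2: "cg M (star A x \<otimes> y \<otimes> star A y) (star A x \<otimes> x \<otimes> star A y)"
      using cg_mul[OF J cg_mul[OF J cg_refl[OF J, of "star A x"] cg_sym[OF J xy]] cg_refl[OF J, of "star A y"]] c
      by simp
    have 3: "cg M (x \<otimes> star A x \<otimes> star A y) (\<one> \<otimes> star A y)"
      using cg_mul[OF J inv_cg[OF M c(1) False] cg_refl[OF J, of "star A y"]] c by simp
    have q1: "cg M (star A x) (star A x \<otimes> y \<otimes> star A y)"
      using cg_sym[OF J 1] c by (simp add: mul_assoc)
    have q3: "cg M (star A x \<otimes> x \<otimes> star A y) (star A y)"
      using 3 c by (simp add: mul_comm[of x])
    show ?thesis using cg_trans[OF J q1 cg_trans[OF J 2 q3]] .
  qed
qed

lemma factor_in: assumes M: "pideal M" and p: "natc A p \<in> M"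
  shows "cg M (\<one> \<oplus> \<ominus> (star A (natc A p) \<otimes> natc A p)) \<one>"
proof -
  have J: "ideal M" using M by (rule pideal_ideal)
  have "cg M (star A (natc A p)) \<zero>" "cg M (natc A p) \<zero>" using star_in[OF J p] p cg_zero[OF J] by auto
  then have "cg M (\<one> \<oplus> \<ominus> (star A (natc A p) \<otimes> natc A p)) (\<one> \<oplus> \<ominus> (\<zero> \<otimes> \<zero>))"
    using J by (intro cg_add cg_neg cg_mul cg_refl) auto
  then show ?thesis by simp
qed

lemma factor_out: assumes M: "pideal M" and p: "natc A p \<notin> M"
  shows "cg M (\<one> \<oplus> \<ominus> (star A (natc A p) \<otimes> natc A p)) \<zero>"
proof -
  have J: "ideal M" using M by (rule pideal_ideal)
  have "cg M (natc A p \<otimes> star A (natc A p)) \<one>" using inv_cg[OF M _ p] by simp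
  then have "cg M (\<one> \<oplus> \<ominus> (star A (natc A p) \<otimes> natc A p)) (\<one> \<oplus> \<ominus> \<one>)"
    using J by (intro cg_add cg_neg cg_refl) (auto simp: mul_comm)
  then show ?thesis by simp
qed

lemma root_cong: assumes M: "pideal M" and p: "prime p" and xy: "cg M x y"
  shows "cg M (root A p x) (root A p y)"
proof -
  have J: "ideal M" using M by (rule pideal_ideal)
  have c: "x \<in> carrier A" "y \<in> carrier A" using xy unfolding cg_def by auto
  define u where "u = root A p x"
  define v where "v = root A p y"
  have uv: "u \<in> carrier A" "v \<in> carrier A" using c p by (auto simp: u_def v_def)
  have p0: "0 < p" using p prime_gt_0_nat by blast
  let ?f = "\<one> \<oplus> \<ominus> (star A (natc A p) \<otimes> natc A p)"
  have eu: "pw A u p = ?f \<otimes> x" and ev: "pw A v p = ?f \<otimes> y" using rt[OF p] c by (auto simp: u_def v_def)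
  show ?thesis
  proof (cases "natc A p \<in> M")
    case True
    have "cg M (pw A u p) (\<one> \<otimes> x)" unfolding eu using cg_mul[OF J factor_in[OF M True] cg_refl[OF J c(1)]] .
    moreover have "cg M (\<one> \<otimes> y) (pw A v p)" unfolding ev using cg_sym[OF J cg_mul[OF J factor_in[OF M True] cg_refl[OF J c(2)]]] .
    ultimately have uvp: "cg M (pw A u p) (pw A v p)" using xy c cg_trans[OF J] by simp
    define a where "a = u \<oplus> \<ominus> v"
    have ac: "a \<in> carrier A" using uv by (simp add: a_def)
    obtain d where d: "d \<in> carrier A" "pw A (a \<oplus> v) p = pw A a p \<oplus> pw A v p \<oplus> natc A p \<otimes> d"
      using frob[OF p ac uv(2)] by blast
    have "a \<oplus> v = u" using uv by (simp add: a_def sub_self)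
    then have e: "pw A u p = pw A a p \<oplus> pw A v p \<oplus> natc A p \<otimes> d" using d by simp
    have "cg M (natc A p \<otimes> d) \<zero>" using idealD(5)[OF J True d(1)] cg_zero[OF J] by blast
    then have "cg M (pw A a p \<oplus> pw A v p \<oplus> natc A p \<otimes> d) (pw A a p \<oplus> pw A v p \<oplus> \<zero>)"
      using J ac uv by (intro cg_add cg_refl) auto
    then have "cg M (pw A a p \<oplus> pw A v p) (pw A u p)" using cg_sym[OF J] ac uv e by simp
    then have "cg M (pw A a p \<oplus> pw A v p) (pw A v p)" using cg_trans[OF J _ uvp] by blast
    then have "pw A a p \<in> M" using cg_cancel[OF J] ac by simp
    then have "a \<in> M" using pideal_pw[OF M ac _ p0] by simp
    then show ?thesis using uv unfolding cg_def a_def u_def v_def by simp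
  next
    case False
    have "cg M (pw A u p) (\<zero> \<otimes> x)" unfolding eu using cg_mul[OF J factor_out[OF M False] cg_refl[OF J c(1)]] .
    then have "pw A u p \<in> M" using c cg_zero[OF J] by simp
    then have "u \<in> M" using pideal_pw[OF M uv(1) _ p0] by simp
    have "cg M (pw A v p) (\<zero> \<otimes> y)" unfolding ev using cg_mul[OF J factor_out[OF M False] cg_refl[OF J c(2)]] .
    then have "pw A v p \<in> M" using c cg_zero[OF J] by simp
    then have "v \<in> M" using pideal_pw[OF M uv(2) _ p0] by simp
    show ?thesis using \<open>u \<in> M\<close> \<open>v \<in> M\<close> cg_zero[OF J] cg_sym[OF J] cg_trans[OF J] unfolding u_def v_def by blast
  qed
qed

end


lemma ICM_D: "ICM_axioms B \<Longrightarrow> comm_ring_ax B \<and>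
     (\<forall>x\<in>carrier B. x = mul B (pw B x 2) (star B x)) \<and>
     (\<forall>x\<in>carrier B. x = star B (star B x)) \<and>
     (\<forall>p x. prime p \<and> x \<in> carrier B \<longrightarrow>
        pw B (root B p x) p =
          mul B (add B (one B) (neg B (mul B (star B (natc B p)) (natc B p)))) x)"
  unfolding ICM_axioms_def by blast
lemma CR_D: "comm_ring_ax B \<Longrightarrow> (\<forall>x\<in>carrier B. \<forall>y\<in>carrier B. \<forall>z\<in>carrier B.
        add B (add B x y) z = add B x (add B y z) \<and>
        mul B (mul B x y) z = mul B x (mul B y z) \<and>
        mul B x (add B y z) = add B (mul B x y) (mul B x z)) \<and>
     (\<forall>x\<in>carrier B. \<forall>y\<in>carrier B. add B x y = add B y x \<and> mul B x y = mul B y x) \<and>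
     (\<forall>x\<in>carrier B. add B x (zero B) = x \<and> add B x (neg B x) = zero B \<and>
        mul B x (one B) = x)"
  unfolding comm_ring_ax_def by blast

context fixes B :: "('a,'m) icalg_scheme" assumes ax: "ICM_axioms B" begin
lemma ax_add_assoc: "x \<in> carrier B \<Longrightarrow> y \<in> carrier B \<Longrightarrow> z \<in> carrier B \<Longrightarrow> add B (add B x y) z = add B x (add B y z)"
  using CR_D[OF conjunct1[OF ICM_D[OF ax]]] by blast
lemma ax_mul_assoc: "x \<in> carrier B \<Longrightarrow> y \<in> carrier B \<Longrightarrow> z \<in> carrier B \<Longrightarrow> mul B (mul B x y) z = mul B x (mul B y z)"
  using CR_D[OF conjunct1[OF ICM_D[OF ax]]] by blast
lemma ax_distr: "x \<in> carrier B \<Longrightarrow> y \<in> carrier B \<Longrightarrow> z \<in> carrier B \<Longrightarrow> mul B x (add B y z) = add B (mul B x y) (mul B x z)"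
  using CR_D[OF conjunct1[OF ICM_D[OF ax]]] by blast
lemma ax_add_comm: "x \<in> carrier B \<Longrightarrow> y \<in> carrier B \<Longrightarrow> add B x y = add B y x"
  using CR_D[OF conjunct1[OF ICM_D[OF ax]]] by blast
lemma ax_mul_comm: "x \<in> carrier B \<Longrightarrow> y \<in> carrier B \<Longrightarrow> mul B x y = mul B y x"
  using CR_D[OF conjunct1[OF ICM_D[OF ax]]] by blast
lemma ax_add_zero: "x \<in> carrier B \<Longrightarrow> add B x (zero B) = x"
  using CR_D[OF conjunct1[OF ICM_D[OF ax]]] by blast
lemma ax_add_neg: "x \<in> carrier B \<Longrightarrow> add B x (neg B x) = zero B"
  using CR_D[OF conjunct1[OF ICM_D[OF ax]]] by blast
lemma ax_mul_one: "x \<in> carrier B \<Longrightarrow> mul B x (one B) = x"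
  using CR_D[OF conjunct1[OF ICM_D[OF ax]]] by blast
lemma ax_reg: "x \<in> carrier B \<Longrightarrow> mul B (pw B x 2) (star B x) = x"
  using ICM_D[OF ax] by auto
lemma ax_sts: "x \<in> carrier B \<Longrightarrow> star B (star B x) = x"
  using ICM_D[OF ax] by auto
lemma ax_rt: "prime p \<Longrightarrow> x \<in> carrier B \<Longrightarrow> pw B (root B p x) p =
          mul B (add B (one B) (neg B (mul B (star B (natc B p)) (natc B p)))) x"
  using ICM_D[OF ax] by blast
lemma ax_add_lcomm: "x \<in> carrier B \<Longrightarrow> y \<in> carrier B \<Longrightarrow> z \<in> carrier B \<Longrightarrow> add B x (add B y z) = add B y (add B x z)"
  by (metis ax_add_assoc ax_add_comm)
lemma ax_mul_lcomm: "x \<in> carrier B \<Longrightarrow> y \<in> carrier B \<Longrightarrow> z \<in> carrier B \<Longrightarrow> mul B x (mul B y z) = mul B y (mul B x z)"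
  by (metis ax_mul_assoc ax_mul_comm)
end

lemma ICM_intro:
  assumes "\<And>x y z. x \<in> carrier B \<Longrightarrow> y \<in> carrier B \<Longrightarrow> z \<in> carrier B \<Longrightarrow> add B (add B x y) z = add B x (add B y z)"
   and "\<And>x y z. x \<in> carrier B \<Longrightarrow> y \<in> carrier B \<Longrightarrow> z \<in> carrier B \<Longrightarrow> mul B (mul B x y) z = mul B x (mul B y z)"
   and "\<And>x y z. x \<in> carrier B \<Longrightarrow> y \<in> carrier B \<Longrightarrow> z \<in> carrier B \<Longrightarrow> mul B x (add B y z) = add B (mul B x y) (mul B x z)"
   and "\<And>x y. x \<in> carrier B \<Longrightarrow> y \<in> carrier B \<Longrightarrow> add B x y = add B y x"
   and "\<And>x y. x \<in> carrier B \<Longrightarrow> y \<in> carrier B \<Longrightarrow> mul B x y = mul B y x"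
   and "\<And>x. x \<in> carrier B \<Longrightarrow> add B x (zero B) = x"
   and "\<And>x. x \<in> carrier B \<Longrightarrow> add B x (neg B x) = zero B"
   and "\<And>x. x \<in> carrier B \<Longrightarrow> mul B x (one B) = x"
   and "\<And>x. x \<in> carrier B \<Longrightarrow> x = mul B (pw B x 2) (star B x)"
   and "\<And>x. x \<in> carrier B \<Longrightarrow> x = star B (star B x)"
   and "\<And>p x. prime p \<Longrightarrow> x \<in> carrier B \<Longrightarrow> pw B (root B p x) p =
          mul B (add B (one B) (neg B (mul B (star B (natc B p)) (natc B p)))) x"
  shows "ICM_axioms B"
  unfolding ICM_axioms_def comm_ring_ax_def
  by (intro conjI ballI allI impI; (elim conjE)?; rule assms; assumption)

lemma alg_rules:
  assumes "is_algebra A"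
  shows alg_zero: "zero A \<in> carrier A" and alg_one: "one A \<in> carrier A"
    and alg_add: "x \<in> carrier A \<Longrightarrow> y \<in> carrier A \<Longrightarrow> add A x y \<in> carrier A"
    and alg_mul: "x \<in> carrier A \<Longrightarrow> y \<in> carrier A \<Longrightarrow> mul A x y \<in> carrier A"
    and alg_neg: "x \<in> carrier A \<Longrightarrow> neg A x \<in> carrier A"
    and alg_star: "x \<in> carrier A \<Longrightarrow> star A x \<in> carrier A"
    and alg_root: "prime p \<Longrightarrow> x \<in> carrier A \<Longrightarrow> root A p x \<in> carrier A"
  using assms unfolding is_algebra_def by auto

lemma alg_pw: "is_algebra A \<Longrightarrow> x \<in> carrier A \<Longrightarrow> pw A x n \<in> carrier A"
  by (induction n) (auto intro: alg_rules)
lemma alg_natc: "is_algebra A \<Longrightarrow> natc A n \<in> carrier A"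
  by (induction n) (auto intro: alg_rules)

lemma hom_rules:
  assumes "is_hom A B h"
  shows hom_c: "x \<in> carrier A \<Longrightarrow> h x \<in> carrier B"
    and hom_zero: "h (zero A) = zero B" and hom_one: "h (one A) = one B"
    and hom_add: "x \<in> carrier A \<Longrightarrow> y \<in> carrier A \<Longrightarrow> h (add A x y) = add B (h x) (h y)"
    and hom_mul: "x \<in> carrier A \<Longrightarrow> y \<in> carrier A \<Longrightarrow> h (mul A x y) = mul B (h x) (h y)"
    and hom_neg: "x \<in> carrier A \<Longrightarrow> h (neg A x) = neg B (h x)"
    and hom_star: "x \<in> carrier A \<Longrightarrow> h (star A x) = star B (h x)"
    and hom_root: "prime p \<Longrightarrow> x \<in> carrier A \<Longrightarrow> h (root A p x) = root B p (h x)"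
  using assms unfolding is_hom_def by auto

lemma hom_pw: "is_algebra A \<Longrightarrow> is_hom A B h \<Longrightarrow> x \<in> carrier A \<Longrightarrow> h (pw A x n) = pw B (h x) n"
  by (induction n) (auto simp: hom_rules alg_pw)
lemma hom_natc: "is_algebra A \<Longrightarrow> is_hom A B h \<Longrightarrow> h (natc A n) = natc B n"
  by (induction n) (auto simp: hom_rules alg_natc alg_rules)

lemma surj_ICM:
  assumes alg: "is_algebra A" and ax: "ICM_axioms A" and h: "is_hom A B h" and s: "h ` carrier A = carrier B"
  shows "ICM_axioms B"
proof -
  note hr = hom_zero[OF h, symmetric] hom_one[OF h, symmetric] hom_add[OF h, symmetric] hom_mul[OF h, symmetric]
    hom_neg[OF h, symmetric] hom_star[OF h, symmetric] hom_root[OF h, symmetric] hom_pw[OF alg h, symmetric] hom_natc[OF alg h, symmetric]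
  note ar = alg_rules[OF alg] alg_pw[OF alg] alg_natc[OF alg]
  note xr = ax_add_assoc[OF ax] ax_mul_assoc[OF ax] ax_distr[OF ax] ax_add_comm[OF ax] ax_mul_comm[OF ax] ax_add_lcomm[OF ax] ax_mul_lcomm[OF ax]
    ax_add_zero[OF ax] ax_add_neg[OF ax] ax_mul_one[OF ax] ax_reg[OF ax] ax_sts[OF ax] ax_rt[OF ax]
  have ex: "\<And>u. u \<in> carrier B \<Longrightarrow> \<exists>x\<in>carrier A. u = h x" using s by auto
  show ?thesis
  proof (rule ICM_intro)
    fix x y z assume "x \<in> carrier B" "y \<in> carrier B" "z \<in> carrier B"
    then obtain a b c where "a \<in> carrier A" "b \<in> carrier A" "c \<in> carrier A" "x = h a" "y = h b" "z = h c"
      using ex by metis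
    then show "add B (add B x y) z = add B x (add B y z)" "mul B (mul B x y) z = mul B x (mul B y z)"
      "mul B x (add B y z) = add B (mul B x y) (mul B x z)"
      by (simp_all add: hr ar xr)
  next
    fix x y assume "x \<in> carrier B" "y \<in> carrier B"
    then obtain a b where "a \<in> carrier A" "b \<in> carrier A" "x = h a" "y = h b"
      using ex by metis
    then show "add B x y = add B y x" "mul B x y = mul B y x"
      by (simp_all add: hr ar xr)
  next
    fix x assume "x \<in> carrier B"
    then obtain a where "a \<in> carrier A" "x = h a" using ex by metis
    then show "add B x (zero B) = x" "add B x (neg B x) = zero B" "mul B x (one B) = x"
       "x = star B (star B x)"
      by (simp_all add: hr ar xr)
    show "x = mul B (pw B x 2) (star B x)" using \<open>a \<in> carrier A\<close> \<open>x = h a\<close>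
      by (simp add: hr ar ax_reg[OF ax])
  next
    fix p :: nat and x assume p: "prime p" and "x \<in> carrier B"
    then obtain a where "a \<in> carrier A" "x = h a" using ex by metis
    then show "pw B (root B p x) p = mul B (add B (one B) (neg B (mul B (star B (natc B p)) (natc B p)))) x"
      using p by (simp add: hr ar xr)
  qed
qed

lemma pullback_ICM:
  fixes A :: "('a,'m) icalg_scheme" and B :: "'i \<Rightarrow> ('b,'n) icalg_scheme"
  assumes alg: "is_algebra A" and h: "\<And>i. i \<in> I \<Longrightarrow> is_hom A (B i) (H i)"
    and ax: "\<And>i. i \<in> I \<Longrightarrow> ICM_axioms (B i)"
    and inj: "\<And>x y. x \<in> carrier A \<Longrightarrow> y \<in> carrier A \<Longrightarrow> (\<And>i. i \<in> I \<Longrightarrow> H i x = H i y) \<Longrightarrow> x = y"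
  shows "ICM_axioms A"
proof -
  note ar = alg_rules[OF alg] alg_pw[OF alg] alg_natc[OF alg]
  have E: "s = t" if "s \<in> carrier A" "t \<in> carrier A" "\<And>i. i \<in> I \<Longrightarrow> H i s = H i t" for s t
    using inj that by blast
  note hs = hom_c[OF h] hom_zero[OF h] hom_one[OF h] hom_add[OF h] hom_mul[OF h] hom_neg[OF h]
    hom_star[OF h] hom_root[OF h] hom_pw[OF alg h] hom_natc[OF alg h]
  show ?thesis
  proof (rule ICM_intro)
    fix x y z assume c: "x \<in> carrier A" "y \<in> carrier A" "z \<in> carrier A"
    show "add A (add A x y) z = add A x (add A y z)"
      by (rule E) (simp_all add: ar c hs ax_add_assoc[OF ax])
    show "mul A (mul A x y) z = mul A x (mul A y z)"
      by (rule E) (simp_all add: ar c hs ax_mul_assoc[OF ax])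
    show "mul A x (add A y z) = add A (mul A x y) (mul A x z)"
      by (rule E) (simp_all add: ar c hs ax_distr[OF ax])
  next
    fix x y assume c: "x \<in> carrier A" "y \<in> carrier A"
    show "add A x y = add A y x"
      by (rule E) (simp_all add: ar c hs ax_add_comm[OF ax])
    show "mul A x y = mul A y x"
      by (rule E) (simp_all add: ar c hs ax_mul_comm[OF ax])
  next
    fix x assume c: "x \<in> carrier A"
    show "add A x (zero A) = x" by (rule E) (simp_all add: ar c hs ax_add_zero[OF ax])
    show "add A x (neg A x) = zero A" by (rule E) (simp_all add: ar c hs ax_add_neg[OF ax])
    show "mul A x (one A) = x" by (rule E) (simp_all add: ar c hs ax_mul_one[OF ax])
    show "x = mul A (pw A x 2) (star A x)" by (rule E) (simp_all add: ar c hs ax_reg[OF ax])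
    show "x = star A (star A x)" by (rule E) (simp_all add: ar c hs ax_sts[OF ax])
  next
    fix p :: nat and x assume p: "prime p" and c: "x \<in> carrier A"
    show "pw A (root A p x) p = mul A (add A (one A) (neg A (mul A (star A (natc A p)) (natc A p)))) x"
      by (rule E) (simp_all add: ar c p hs ax_rt[OF ax])
  qed
qed



locale fld = cr +
  assumes one_ne: "one A \<noteq> zero A"
    and inv_ex: "x \<in> carrier A \<Longrightarrow> x \<noteq> zero A \<Longrightarrow> \<exists>y\<in>carrier A. mul A x y = one A"
begin

lemma nzd: "x \<in> carrier A \<Longrightarrow> y \<in> carrier A \<Longrightarrow> x \<otimes> y = \<zero> \<Longrightarrow> x = \<zero> \<or> y = \<zero>"
proof (rule ccontr)
  assume c: "x \<in> carrier A" "y \<in> carrier A" "x \<otimes> y = \<zero>" "\<not> (x = \<zero> \<or> y = \<zero>)"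
  then obtain b where b: "b \<in> carrier A" "x \<otimes> b = \<one>" using inv_ex by blast
  have "b \<otimes> (x \<otimes> y) = (x \<otimes> b) \<otimes> y" using b(1) c(1,2) by (simp add: rs)
  also have "\<dots> = y" unfolding b(2) using c(2) by simp
  finally have "b \<otimes> (x \<otimes> y) = y" .
  then show False using c b by simp
qed

lemma pw_eq0: "x \<in> carrier A \<Longrightarrow> pw A x n = \<zero> \<Longrightarrow> x = \<zero>"
proof (induction n)
  case 0 then show ?case using one_ne by simp
next
  case (Suc n) then show ?case using nzd[of "pw A x n" x] by auto
qed

lemma natc_mod: "natc A q = \<zero> \<Longrightarrow> natc A p = natc A (p mod q)"
proof -
  assume q: "natc A q = \<zero>"
  have "p = q * (p div q) + p mod q" by simp
  then have "natc A p = natc A q \<otimes> natc A (p div q) \<oplus> natc A (p mod q)"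
    by (metis natc_add natc_mult)
  then show ?thesis using q by simp
qed

lemma char_lemma:
  assumes wr: "weakly_rooted A" and p: "prime p" and np: "natc A p = \<zero>"
  shows "char_eq A p"
proof -
  have "\<not> char_zero_alg A" using np p prime_gt_0_nat unfolding char_zero_alg_def by blast
  then obtain q where q: "prime q" "char_eq A q" using wr unfolding weakly_rooted_def by blast
  show ?thesis
  proof (cases "q = p")
    case True then show ?thesis using q by simp
  next
    case False
    have "\<not> q dvd p" using False p q(1) by (metis prime_nat_iff prime_gt_1_nat less_not_refl)
    then have "p mod q \<noteq> 0" by (simp add: dvd_eq_mod_eq_0)
    moreover have "p mod q < q" using q(1) prime_gt_0_nat by simp
    moreover have "natc A q = \<zero>" using q(2) unfolding char_eq_def by simp
    ultimately have "natc A p \<noteq> \<zero>" using q(2) natc_mod[of q p] unfolding char_eq_def by simp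
    then show ?thesis using np by simp
  qed
qed

lemma least_char:
  assumes "\<not> char_zero_alg A"
  shows "\<exists>q. prime q \<and> char_eq A q"
proof -
  have ex: "\<exists>n. 0 < n \<and> natc A n = \<zero>" using assms unfolding char_zero_alg_def by blast
  define q where "q = (LEAST n. 0 < n \<and> natc A n = \<zero>)"
  have q: "0 < q" "natc A q = \<zero>" using LeastI_ex[OF ex] unfolding q_def by auto
  have mn: "\<And>m. 0 < m \<Longrightarrow> m < q \<Longrightarrow> natc A m \<noteq> \<zero>" using not_less_Least unfolding q_def by blast
  have "q \<noteq> 1" using q one_ne by auto
  then have q1: "1 < q" using q by simp
  have "prime q" unfolding prime_nat_iff
  proof (intro conjI allI impI q1)
    fix m assume "m dvd q"
    then obtain k where k: "q = m * k" by blast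
    then have mk: "0 < m" "0 < k" "m \<le> q" "k \<le> q" using q(1) by auto
    have "natc A m \<otimes> natc A k = \<zero>" using q(2) k natc_mult by metis
    then have "natc A m = \<zero> \<or> natc A k = \<zero>" using nzd by simp
    then show "m = 1 \<or> m = q"
    proof
      assume "natc A m = \<zero>" then have "m = q" using mn mk by (meson le_neq_implies_less)
      then show ?thesis by simp
    next
      assume "natc A k = \<zero>" then have "k = q" using mn mk by (meson le_neq_implies_less)
      then show ?thesis using k q(1) by simp
    qed
  qed
  moreover have "char_eq A q" unfolding char_eq_def using q mn by blast
  ultimately show ?thesis by blast
qed

end

lemma field_fld: "is_field F \<Longrightarrow> fld F"
  unfolding is_field_def fld_def fld_axioms_def cr_def is_algebra_def by auto

lemma icf_ICM:
  assumes F: "implicitly_closed_field F"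
  shows "ICM_axioms F"
proof -
  have isf: "is_field F" using F unfolding implicitly_closed_field_def by simp
  interpret fld F using field_fld[OF isf] .
  have alg: "is_algebra F" using isf unfolding is_field_def by simp
  have wr: "weakly_rooted F" and s0: "star F (zero F) = zero F"
    and si: "\<And>a. a \<in> carrier F \<Longrightarrow> a \<noteq> zero F \<Longrightarrow> mul F a (star F a) = one F"
    and r1: "\<And>p a. prime p \<Longrightarrow> a \<in> carrier F \<Longrightarrow> char_eq F p \<Longrightarrow> pw F (root F p a) p = a"
    and r2: "\<And>p a. prime p \<Longrightarrow> a \<in> carrier F \<Longrightarrow> \<not> char_eq F p \<Longrightarrow> root F p a = zero F"
    using F unfolding implicitly_closed_field_def by auto
  have sc: "\<And>x. x \<in> carrier F \<Longrightarrow> star F x \<in> carrier F" using alg_star[OF alg] .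
  note C = CR_D[OF ax]
  show ?thesis
  proof (rule ICM_intro)
    show "\<And>x y z. x \<in> carrier F \<Longrightarrow> y \<in> carrier F \<Longrightarrow> z \<in> carrier F \<Longrightarrow> add F (add F x y) z = add F x (add F y z)"
      "\<And>x y z. x \<in> carrier F \<Longrightarrow> y \<in> carrier F \<Longrightarrow> z \<in> carrier F \<Longrightarrow> mul F (mul F x y) z = mul F x (mul F y z)"
      "\<And>x y z. x \<in> carrier F \<Longrightarrow> y \<in> carrier F \<Longrightarrow> z \<in> carrier F \<Longrightarrow> mul F x (add F y z) = add F (mul F x y) (mul F x z)"
      "\<And>x y. x \<in> carrier F \<Longrightarrow> y \<in> carrier F \<Longrightarrow> add F x y = add F y x"
      "\<And>x y. x \<in> carrier F \<Longrightarrow> y \<in> carrier F \<Longrightarrow> mul F x y = mul F y x"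
      "\<And>x. x \<in> carrier F \<Longrightarrow> add F x (zero F) = x"
      "\<And>x. x \<in> carrier F \<Longrightarrow> add F x (neg F x) = zero F"
      "\<And>x. x \<in> carrier F \<Longrightarrow> mul F x (one F) = x"
      by (simp_all add: add_assoc mul_assoc distr add_comm mul_comm add_lcomm mul_lcomm)
  next
    fix x assume x: "x \<in> carrier F"
    show "x = mul F (pw F x 2) (star F x)"
    proof (cases "x = zero F")
      case True then show ?thesis using s0 by simp
    next
      case False then show ?thesis using x si sc by (simp add: numeral_2_eq_2 mul_assoc)
    qed
    show "x = star F (star F x)"
    proof (cases "x = zero F")
      case True then show ?thesis using s0 by simp
    next
      case False
      have "star F x \<noteq> zero F" using si[OF x False] x one_ne by auto
      then have e: "mul F (star F x) (star F (star F x)) = one F" using si sc x by simp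
      have "x = mul F x (mul F (star F x) (star F (star F x)))" unfolding e using x by simp
      also have "\<dots> = mul F (mul F x (star F x)) (star F (star F x))" using sc x by (simp add: mul_assoc)
      also have "\<dots> = star F (star F x)" unfolding si[OF x False] using sc x by simp
      finally show ?thesis .
    qed
  next
    fix p :: nat and x assume p: "prime p" and x: "x \<in> carrier F"
    show "pw F (root F p x) p = mul F (add F (one F) (neg F (mul F (star F (natc F p)) (natc F p)))) x"
    proof (cases "char_eq F p")
      case True
      then have "natc F p = zero F" unfolding char_eq_def by simp
      then show ?thesis using r1[OF p x True] s0 x by simp
    next
      case False
      then have "natc F p \<noteq> zero F" using char_lemma[OF wr p] by blast
      then have "mul F (star F (natc F p)) (natc F p) = one F" using si[of "natc F p"] sc mul_comm by simp
      moreover have "0 < p" using p prime_gt_0_nat by blast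
      ultimately show ?thesis using r2[OF p x False] x by (simp add: pw_zero)
    qed
  qed
qed

lemma ICM_icf:
  assumes isf: "is_field F" and icm: "ICM_axioms F"
  shows "implicitly_closed_field F"
proof -
  interpret fld F using field_fld[OF isf] .
  have alg: "is_algebra F" using isf unfolding is_field_def by simp
  have sc: "\<And>x. x \<in> carrier F \<Longrightarrow> star F x \<in> carrier F" using alg_star[OF alg] .
  have rc: "\<And>p x. prime p \<Longrightarrow> x \<in> carrier F \<Longrightarrow> root F p x \<in> carrier F" using alg_root[OF alg] .
  have s0: "star F (zero F) = zero F"
  proof -
    have "star F (zero F) = mul F (pw F (star F (zero F)) 2) (star F (star F (zero F)))"
      using ax_reg[OF icm, of "star F (zero F)"] sc by simp
    also have "\<dots> = zero F" using ax_sts[OF icm, of "zero F"] sc by simp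
    finally show ?thesis .
  qed
  have si: "mul F a (star F a) = one F" if a: "a \<in> carrier F" "a \<noteq> zero F" for a
  proof -
    obtain b where b: "b \<in> carrier F" "mul F a b = one F" using inv_ex a by blast
    have r: "mul F (mul F a a) (star F a) = a" using ax_reg[OF icm a(1)] a by (simp add: numeral_2_eq_2)
    have "mul F a (star F a) = mul F (mul F a b) (mul F a (star F a))" unfolding b(2) using a sc by simp
    also have "\<dots> = mul F b (mul F (mul F a a) (star F a))" using b(1) a sc by (simp add: rs)
    also have "\<dots> = mul F a b" unfolding r using a b(1) by (simp add: mul_comm)
    also have "\<dots> = one F" by (rule b(2))
    finally show ?thesis .
  qed
  have f1: "mul F (add F (one F) (neg F (mul F (star F (natc F p)) (natc F p)))) x = x"
    if "natc F p = zero F" "x \<in> carrier F" for p x using that s0 by simp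
  have wr: "weakly_rooted F"
  proof (cases "char_zero_alg F")
    case True then show ?thesis unfolding weakly_rooted_def by simp
  next
    case False
    then obtain q where q: "prime q" "char_eq F q" using least_char by blast
    have "\<forall>a\<in>carrier F. \<exists>b\<in>carrier F. pw F b q = a"
    proof
      fix a assume a: "a \<in> carrier F"
      have "natc F q = zero F" using q(2) unfolding char_eq_def by simp
      then have "pw F (root F q a) q = a" using ax_rt[OF icm q(1) a] s0 a by simp
      then show "\<exists>b\<in>carrier F. pw F b q = a" using rc q a by blast
    qed
    then show ?thesis using q unfolding weakly_rooted_def by blast
  qed
  show ?thesis unfolding implicitly_closed_field_def
  proof (intro conjI isf wr s0 ballI impI allI)
    fix a assume "a \<in> carrier F" "a \<noteq> zero F" then show "mul F a (star F a) = one F" using si by blast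
  next
    fix p :: nat and a assume pa: "prime p \<and> a \<in> carrier F" and ce: "char_eq F p"
    show "pw F (root F p a) p = a"
      using ax_rt[OF icm] pa s0 ce unfolding char_eq_def by simp
  next
    fix p :: nat and a assume pa: "prime p \<and> a \<in> carrier F" and nc: "\<not> char_eq F p"
      have "natc F p \<noteq> zero F" using char_lemma[OF wr] pa nc by blast
      then have "mul F (star F (natc F p)) (natc F p) = one F" using si[of "natc F p"] sc mul_comm by simp
      then have "pw F (root F p a) p = zero F" using ax_rt[OF icm] pa by simp
      then show "root F p a = zero F" using pw_eq0 rc pa by blast
  qed
qed



lemma icm_intro: "is_algebra A \<Longrightarrow> ICM_axioms A \<Longrightarrow> icm A"
  unfolding icm_def icm_axioms_def cr_def
  by (intro conjI allI impI)
     (auto simp: alg_rules ax_reg ax_sts ax_rt ICM_D[THEN conjunct1] dest: ax_reg[symmetric] ax_sts[symmetric])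

context icm begin

definition rp :: "'a set \<Rightarrow> 'a \<Rightarrow> 'a" where "rp M x = (SOME y. cg M x y)"

definition qalg :: "'a set \<Rightarrow> 'a icalg" where
  "qalg M = \<lparr> carrier = rp M ` carrier A, add = (\<lambda>u v. rp M (u \<oplus> v)), mul = (\<lambda>u v. rp M (u \<otimes> v)),
     neg = (\<lambda>u. rp M (\<ominus> u)), zero = rp M \<zero>, one = rp M \<one>, star = (\<lambda>u. rp M (star A u)),
     root = (\<lambda>p u. rp M (root A p u)) \<rparr>"

lemma qalg_simps: "carrier (qalg M) = rp M ` carrier A" "add (qalg M) u v = rp M (u \<oplus> v)"
  "mul (qalg M) u v = rp M (u \<otimes> v)" "neg (qalg M) u = rp M (\<ominus> u)" "zero (qalg M) = rp M \<zero>"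
  "one (qalg M) = rp M \<one>" "star (qalg M) u = rp M (star A u)" "root (qalg M) p u = rp M (root A p u)"
  unfolding qalg_def by simp_all

context fixes M assumes M: "pideal M" begin

lemma J: "ideal M" using M by (rule pideal_ideal)

lemma rp_cg: "x \<in> carrier A \<Longrightarrow> cg M x (rp M x)"
  unfolding rp_def by (rule someI[of "cg M x" x]) (rule cg_refl[OF J])

lemma rp_c: "x \<in> carrier A \<Longrightarrow> rp M x \<in> carrier A"
  using rp_cg unfolding cg_def by blast

lemma rp_eq: "x \<in> carrier A \<Longrightarrow> y \<in> carrier A \<Longrightarrow> rp M x = rp M y \<longleftrightarrow> cg M x y"
proof
  assume c: "x \<in> carrier A" "y \<in> carrier A" and e: "rp M x = rp M y"
  have "cg M x (rp M y)" using rp_cg[OF c(1)] e by simp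
  then show "cg M x y" using cg_trans[OF J _ cg_sym[OF J rp_cg[OF c(2)]]] by blast
next
  assume c: "x \<in> carrier A" "y \<in> carrier A" and xy: "cg M x y"
  have "(\<lambda>z. cg M x z) = (\<lambda>z. cg M y z)"
    using xy cg_trans[OF J] cg_sym[OF J] by blast
  then show "rp M x = rp M y" unfolding rp_def by simp
qed

lemma rp_hom: "is_hom A (qalg M) (rp M)"
  unfolding is_hom_def qalg_simps
proof (intro conjI ballI allI impI)
  show "rp M \<in> carrier A \<rightarrow> rp M ` carrier A" by auto
  show "rp M \<zero> = rp M \<zero>" "rp M \<one> = rp M \<one>" by simp_all
next
  fix x y assume c: "x \<in> carrier A" "y \<in> carrier A"
  show "rp M (x \<oplus> y) = rp M (rp M x \<oplus> rp M y)"
    using c rp_c by (subst rp_eq) (auto intro: cg_add[OF J] rp_cg)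
  show "rp M (x \<otimes> y) = rp M (rp M x \<otimes> rp M y)"
    using c rp_c by (subst rp_eq) (auto intro: cg_mul[OF J] rp_cg)
next
  fix x assume c: "x \<in> carrier A"
  show "rp M (\<ominus> x) = rp M (\<ominus> rp M x)"
    using c rp_c by (subst rp_eq) (auto intro: cg_neg[OF J] rp_cg)
  show "rp M (star A x) = rp M (star A (rp M x))"
    using c rp_c by (subst rp_eq) (auto intro: star_cong[OF M] rp_cg)
next
  fix p :: nat and x assume px: "prime p \<and> x \<in> carrier A"
  show "rp M (root A p x) = rp M (root A p (rp M x))"
    using px rp_c by (subst rp_eq) (auto intro: root_cong[OF M] rp_cg)
qed

lemma qalg_alg: "is_algebra (qalg M)"
  unfolding is_algebra_def qalg_simps using rp_c by auto

lemma qalg_icf: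
  assumes alg: "is_algebra A" and ax0: "ICM_axioms A"
  shows "implicitly_closed_field (qalg M)"
proof -
  have iq: "ICM_axioms (qalg M)"
    using surj_ICM[OF alg ax0 rp_hom] qalg_simps(1) by simp
  have one: "rp M \<one> \<noteq> rp M \<zero>"
  proof
    assume "rp M \<one> = rp M \<zero>"
    then have "cg M \<one> \<zero>" using rp_eq by simp
    then show False using M cg_zero[OF J] unfolding pideal_def by simp
  qed
  have "is_field (qalg M)" unfolding is_field_def
  proof (intro conjI qalg_alg ballI impI)
    show "comm_ring_ax (qalg M)" using ICM_D[OF iq] by simp
    show "one (qalg M) \<noteq> zero (qalg M)" using one qalg_simps by simp
  next
    fix u assume u: "u \<in> carrier (qalg M)" "u \<noteq> zero (qalg M)"
    then obtain x where x: "x \<in> carrier A" "u = rp M x" using qalg_simps by auto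
    have "x \<notin> M"
    proof
      assume "x \<in> M" then have "cg M x \<zero>" using cg_zero[OF J] by simp
      then show False using u x rp_eq qalg_simps by simp
    qed
    have "mul (qalg M) u (rp M (star A x)) = rp M (x \<otimes> star A x)"
      using hom_mul[OF rp_hom, of x "star A x"] x by simp
    also have "\<dots> = rp M \<one>" using rp_eq inv_cg[OF M x(1) \<open>x \<notin> M\<close>] x by simp
    finally show "\<exists>y\<in>carrier (qalg M). mul (qalg M) u y = one (qalg M)"
      using x qalg_simps by auto
  qed
  then show ?thesis using ICM_icf iq by blast
qed

end
end


lemma dir1:
  fixes A :: "'a icalg" and I :: "'i set" and F :: "'i \<Rightarrow> 'b icalg"
  assumes alg: "is_algebra A" and e: "ICM_embedding A I F h"
  shows "ICM_axioms A"
proof -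
  have icf: "\<And>i. i \<in> I \<Longrightarrow> implicitly_closed_field (F i)" and hh: "is_hom A (prod_alg I F) h"
    and inj: "inj_on h (carrier A)" using e unfolding ICM_embedding_def by auto
  have hc: "\<And>x. x \<in> carrier A \<Longrightarrow> h x \<in> PiE I (\<lambda>i. carrier (F i))"
    using hom_c[OF hh] unfolding prod_alg_def by simp
  show ?thesis
  proof (rule pullback_ICM[OF alg, where I = I and B = F and H = "\<lambda>i x. h x i"])
    fix i assume i: "i \<in> I"
    show "ICM_axioms (F i)" using icf_ICM[OF icf[OF i]] .
    show "is_hom A (F i) (\<lambda>x. h x i)"
      unfolding is_hom_def
    proof (intro conjI ballI allI impI)
      show "(\<lambda>x. h x i) \<in> carrier A \<rightarrow> carrier (F i)" using hc i by (auto simp: PiE_iff)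
      show "h (zero A) i = zero (F i)" using hom_zero[OF hh] i unfolding prod_alg_def by simp
      show "h (one A) i = one (F i)" using hom_one[OF hh] i unfolding prod_alg_def by simp
    next
      fix x y assume "x \<in> carrier A" "y \<in> carrier A"
      then show "h (add A x y) i = add (F i) (h x i) (h y i)" "h (mul A x y) i = mul (F i) (h x i) (h y i)"
        using hom_add[OF hh] hom_mul[OF hh] i unfolding prod_alg_def by simp_all
    next
      fix x assume "x \<in> carrier A"
      then show "h (neg A x) i = neg (F i) (h x i)" "h (star A x) i = star (F i) (h x i)"
        using hom_neg[OF hh] hom_star[OF hh] i unfolding prod_alg_def by simp_all
    next
      fix p :: nat and x assume "prime p \<and> x \<in> carrier A"
      then show "h (root A p x) i = root (F i) p (h x i)"
        using hom_root[OF hh] i unfolding prod_alg_def by simp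
    qed
  next
    fix x y assume c: "x \<in> carrier A" "y \<in> carrier A" and eq: "\<And>i. i \<in> I \<Longrightarrow> h x i = h y i"
    have "h x = h y" using PiE_ext[OF hc[OF c(1)] hc[OF c(2)]] eq by blast
    then show "x = y" using inj c unfolding inj_on_def by blast
  qed
qed

lemma dir2:
  fixes A :: "'a icalg"
  assumes alg: "is_algebra A" and ax0: "ICM_axioms A"
  shows "\<exists>(I :: 'a set) (F :: 'a \<Rightarrow> 'a icalg) h. ICM_embedding A I F h"
proof -
  interpret icm A using icm_intro[OF alg ax0] .
  define I where "I = carrier A - {zero A}"
  define Mf where "Mf = (\<lambda>i. SOME M. pideal M \<and> i \<notin> M)"
  have Mf: "\<And>i. i \<in> I \<Longrightarrow> pideal (Mf i) \<and> i \<notin> Mf i"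
    unfolding Mf_def I_def using exists_pideal by (metis (mono_tags, lifting) DiffE singletonI someI_ex)
  define F where "F = (\<lambda>i. qalg (Mf i))"
  define h where "h = (\<lambda>x. \<lambda>i\<in>I. rp (Mf i) x)"
  have icf: "\<forall>i\<in>I. implicitly_closed_field (F i)"
    using qalg_icf[OF _ alg ax0] Mf unfolding F_def by blast
  have hom: "is_hom A (prod_alg I F) h"
    unfolding is_hom_def prod_alg_def
  proof (simp only: icalg.simps, intro conjI ballI allI impI)
    show "h \<in> carrier A \<rightarrow> PiE I (\<lambda>i. carrier (F i))"
      unfolding h_def F_def qalg_simps by auto
    show "h \<zero> = (\<lambda>i\<in>I. zero (F i))" "h \<one> = (\<lambda>i\<in>I. one (F i))"
      unfolding h_def F_def qalg_simps by simp_all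
  next
    fix x y assume c: "x \<in> carrier A" "y \<in> carrier A"
    show "h (x \<oplus> y) = (\<lambda>i\<in>I. add (F i) (h x i) (h y i))"
      unfolding h_def F_def using hom_add[OF rp_hom, OF _ c] Mf by (intro restrict_ext) auto
    show "h (x \<otimes> y) = (\<lambda>i\<in>I. mul (F i) (h x i) (h y i))"
      unfolding h_def F_def using hom_mul[OF rp_hom, OF _ c] Mf by (intro restrict_ext) auto
  next
    fix x assume c: "x \<in> carrier A"
    show "h (\<ominus> x) = (\<lambda>i\<in>I. neg (F i) (h x i))"
      unfolding h_def F_def using hom_neg[OF rp_hom, OF _ c] Mf by (intro restrict_ext) auto
    show "h (star A x) = (\<lambda>i\<in>I. star (F i) (h x i))"
      unfolding h_def F_def using hom_star[OF rp_hom, OF _ c] Mf by (intro restrict_ext) auto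
  next
    fix p :: nat and x assume c: "prime p \<and> x \<in> carrier A"
    show "h (root A p x) = (\<lambda>i\<in>I. root (F i) p (h x i))"
      unfolding h_def F_def using hom_root[OF rp_hom, of _ p x] c Mf by (intro restrict_ext) auto
  qed
  have inj: "inj_on h (carrier A)"
  proof (rule inj_onI, rule ccontr)
    fix x y assume c: "x \<in> carrier A" "y \<in> carrier A" and e: "h x = h y" and ne: "x \<noteq> y"
    define i where "i = x \<oplus> \<ominus> y"
    have "i \<noteq> \<zero>"
    proof
      assume "i = \<zero>"
      then have "\<ominus> y = \<ominus> x" using neg_unique[of x "\<ominus> y"] c unfolding i_def by simp
      then have "y = x" using c by (metis neg_neg)
      then show False using ne by simp
    qed
    then have i: "i \<in> I" using c unfolding I_def i_def by simp
    have "rp (Mf i) x = rp (Mf i) y" using e i unfolding h_def by (metis restrict_apply')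
    then have "cg (Mf i) x y" using rp_eq Mf[OF i] c by blast
    then have "i \<in> Mf i" unfolding cg_def i_def by simp
    then show False using Mf[OF i] by simp
  qed
  show ?thesis unfolding ICM_embedding_def using icf hom inj by blast
qed

theorem mainTheorem5:
  fixes A :: "'a icalg"
  assumes "is_algebra A"
  shows "((\<exists>(I :: 'i set) (F :: 'i \<Rightarrow> 'b icalg) h. ICM_embedding A I F h) \<longrightarrow> ICM_axioms A)
       \<and> (ICM_axioms A \<longrightarrow> (\<exists>(I :: 'a set) (F :: 'a \<Rightarrow> 'a icalg) h. ICM_embedding A I F h))"
  using dir1[OF assms] dir2[OF assms] by blast


end
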